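(* Assume $V=L$. Let $\zeta\in\Xi$, $X\in\mathrm{IPS}_\zeta$, and let $A\subseteq X$ be a set which has the Baire property relative to $X$ and is not meager relative to $X$. Then there is $Y\in\mathrm{IPS}_\zeta$ with $Y\subseteq A$.
   Context: $T$ is the set of all nonempty finite sequences of countable ordinals, ordered by strict extension $\subset$. $\Xi$ is the set of all at most countable $\xi\subseteq T$ closed downward under $\subset$. $D=2^\omega$; $D^\xi$ is the product of $\xi$ copies of $D$ with the product topology; for $\eta\subseteq\xi$ and $x\in D^\xi$, $x\restriction\eta$ is the restriction. For $\zeta\in\Xi$, $\mathrm{IPS}_\zeta$ is the set of all $X\subseteq D^\zeta$ for which there is a homeomorphism $H$ of $D^\zeta$ onto $X$ such that for all $x_0,x_1\in D^\zeta$ and all $\xi\in\Xi$, $\xi\subseteq\zeta$: $x_0\restriction\xi=x_1\restriction\xi\iff H(x_0)\restriction\xi=H(x_1)\restriction\xi$. *)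

theory Defs
  imports "HOL-Analysis.Analysis"
begin

text \<open>Nodes of the tree T: nonempty finite sequences (lists) with entries of type 'a
  (in the paper: countable ordinals). Strict extension: t is a proper initial segment of s.\<close>
definition strict_ext :: "'a list \<Rightarrow> 'a list \<Rightarrow> bool" where
  "strict_ext t s \<longleftrightarrow> (\<exists>u. u \<noteq> [] \<and> s = t @ u)"

definition Xi_set :: "'a list set \<Rightarrow> bool" where
  "Xi_set \<xi> \<longleftrightarrow> countable \<xi> \<and> (\<forall>s\<in>\<xi>. s \<noteq> []) \<and>
     (\<forall>s\<in>\<xi>. \<forall>t. t \<noteq> [] \<and> strict_ext t s \<longrightarrow> t \<in> \<xi>)"

definition Dtop :: "(nat \<Rightarrow> bool) topology" where
  "Dtop = product_topology (\<lambda>_. discrete_topology (UNIV :: bool set)) (UNIV :: nat set)"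

definition Dpow :: "'a list set \<Rightarrow> ('a list \<Rightarrow> (nat \<Rightarrow> bool)) topology" where
  "Dpow \<xi> = product_topology (\<lambda>_. Dtop) \<xi>"

definition IPS :: "'a list set \<Rightarrow> ('a list \<Rightarrow> (nat \<Rightarrow> bool)) set set" where
  "IPS \<zeta> = {X. X \<subseteq> topspace (Dpow \<zeta>) \<and>
     (\<exists>H. homeomorphic_map (Dpow \<zeta>) (subtopology (Dpow \<zeta>) X) H \<and>
       (\<forall>x0\<in>topspace (Dpow \<zeta>). \<forall>x1\<in>topspace (Dpow \<zeta>). \<forall>\<xi>. Xi_set \<xi> \<and> \<xi> \<subseteq> \<zeta> \<longrightarrow>
          (restrict x0 \<xi> = restrict x1 \<xi> \<longleftrightarrow> restrict (H x0) \<xi> = restrict (H x1) \<xi>)))}"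

definition nowhere_dense_in :: "'b topology \<Rightarrow> 'b set \<Rightarrow> bool" where
  "nowhere_dense_in T S \<longleftrightarrow> S \<subseteq> topspace T \<and> T interior_of (T closure_of S) = {}"

definition meager_in :: "'b topology \<Rightarrow> 'b set \<Rightarrow> bool" where
  "meager_in T S \<longleftrightarrow> S \<subseteq> topspace T \<and>
     (\<exists>F. countable F \<and> (\<forall>N\<in>F. nowhere_dense_in T N) \<and> S \<subseteq> \<Union>F)"

definition baire_property_in :: "'b topology \<Rightarrow> 'b set \<Rightarrow> bool" where
  "baire_property_in T S \<longleftrightarrow> S \<subseteq> topspace T \<and>
     (\<exists>U. openin T U \<and> meager_in T ((S - U) \<union> (U - S)))"

end

theory Submission
  imports Defs
begin

lemma topspace_Dtop [simp]: "topspace Dtop = UNIV"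
  by (auto simp: Dtop_def)

lemma topspace_Dpow: "topspace (Dpow \<zeta>) = (\<Pi>\<^sub>E s\<in>\<zeta>. UNIV)"
  by (simp add: Dpow_def)

lemma compact_Dpow: "compact_space (Dpow \<zeta>)"
  unfolding Dpow_def Dtop_def
  by (simp add: compact_space_product_topology compact_space_discrete_topology)

lemma Hausdorff_Dpow: "Hausdorff_space (Dpow \<zeta>)"
  unfolding Dpow_def Dtop_def
  by (simp add: Hausdorff_space_product_topology)

definition bitat :: "('a list \<Rightarrow> nat \<Rightarrow> bool) \<Rightarrow> 'a list \<times> nat \<Rightarrow> bool" where
  "bitat x i = x (fst i) (snd i)"

definition Cyl :: "'a list set \<Rightarrow> ('a list \<times> nat \<Rightarrow> bool option) \<Rightarrow> ('a list \<Rightarrow> nat \<Rightarrow> bool) set" where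
  "Cyl \<zeta> p = {x \<in> topspace (Dpow \<zeta>). \<forall>i b. p i = Some b \<longrightarrow> bitat x i = b}"

lemma Cyl_mono: "p \<subseteq>\<^sub>m q \<Longrightarrow> Cyl \<zeta> q \<subseteq> Cyl \<zeta> p"
proof
  fix x assume pq: "p \<subseteq>\<^sub>m q" and x: "x \<in> Cyl \<zeta> q"
  have "p i = Some b \<Longrightarrow> q i = Some b" for i b using pq unfolding map_le_def by (metis domI)
  then show "x \<in> Cyl \<zeta> p" using x unfolding Cyl_def by blast
qed

lemma cont_bit:
  assumes "s \<in> \<zeta>"
  shows "continuous_map (Dpow \<zeta>) (discrete_topology UNIV) (\<lambda>x. x s k)"
proof -
  have a: "continuous_map (Dpow \<zeta>) Dtop (\<lambda>x. x s)"
    unfolding Dpow_def using assms by (rule continuous_map_product_projection)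
  have b: "continuous_map Dtop (discrete_topology UNIV) (\<lambda>y. y k)"
    unfolding Dtop_def by (rule continuous_map_product_projection) (rule UNIV_I)
  show ?thesis using continuous_map_compose[OF a b] by (simp add: o_def)
qed

lemma open_pts:
  assumes "finite D" "D \<subseteq> \<zeta> \<times> UNIV"
  shows "openin (Dpow \<zeta>) {x \<in> topspace (Dpow \<zeta>). \<forall>i\<in>D. bitat x i = v i}"
  using assms
proof (induction D rule: finite_induct)
  case empty
  then show ?case by simp
next
  case (insert i D)
  have o1: "openin (Dpow \<zeta>) {x \<in> topspace (Dpow \<zeta>). x (fst i) (snd i) \<in> {v i}}"
    using insert.prems by (intro openin_continuous_map_preimage[OF cont_bit]) auto
  have "{x \<in> topspace (Dpow \<zeta>). \<forall>j\<in>insert i D. bitat x j = v j} =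
     {x \<in> topspace (Dpow \<zeta>). x (fst i) (snd i) \<in> {v i}} \<inter> {x \<in> topspace (Dpow \<zeta>). \<forall>j\<in>D. bitat x j = v j}"
    by (auto simp: bitat_def)
  moreover have o2: "openin (Dpow \<zeta>) {x \<in> topspace (Dpow \<zeta>). \<forall>j\<in>D. bitat x j = v j}"
    using insert.IH insert.prems by simp
  ultimately show ?case using openin_Int[OF o1 o2] by simp
qed

lemma Cyl_open:
  assumes "finite (dom p)" "dom p \<subseteq> \<zeta> \<times> UNIV"
  shows "openin (Dpow \<zeta>) (Cyl \<zeta> p)"
proof -
  have e: "(\<forall>i b. p i = Some b \<longrightarrow> bitat x i = b) \<longleftrightarrow> (\<forall>i\<in>dom p. bitat x i = the (p i))" for x
  proof
    assume h: "\<forall>i b. p i = Some b \<longrightarrow> bitat x i = b"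
    show "\<forall>i\<in>dom p. bitat x i = the (p i)"
    proof
      fix i assume "i \<in> dom p"
      then obtain b where pb: "p i = Some b" by blast
      have "bitat x i = b" using h pb by blast
      then show "bitat x i = the (p i)" using pb by simp
    qed
  next
    assume h: "\<forall>i\<in>dom p. bitat x i = the (p i)"
    show "\<forall>i b. p i = Some b \<longrightarrow> bitat x i = b"
    proof (intro allI impI)
      fix i b assume "p i = Some b"
      then show "bitat x i = b" using h[rule_format, of i] by (simp add: domI)
    qed
  qed
  have "Cyl \<zeta> p = {x \<in> topspace (Dpow \<zeta>). \<forall>i\<in>dom p. bitat x i = the (p i)}"
    unfolding Cyl_def using e by blast
  then show ?thesis using open_pts[OF assms] by simp
qed

lemma Cyl_nonempty:
  assumes "dom p \<subseteq> \<zeta> \<times> UNIV"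
  shows "Cyl \<zeta> p \<noteq> {}"
proof -
  define x where "x = (\<lambda>s. if s \<in> \<zeta> then (\<lambda>k. case p (s,k) of Some b \<Rightarrow> b | None \<Rightarrow> False) else undefined)"
  have "x \<in> Cyl \<zeta> p"
    unfolding Cyl_def using assms by (auto simp: x_def topspace_Dpow bitat_def)
  then show ?thesis by blast
qed

lemma basis:
  assumes U: "openin (Dpow \<zeta>) U" and x: "x \<in> U"
  shows "\<exists>p. finite (dom p) \<and> dom p \<subseteq> \<zeta> \<times> UNIV \<and> x \<in> Cyl \<zeta> p \<and> Cyl \<zeta> p \<subseteq> U"
proof -
  obtain V where Vf: "finite {s \<in> \<zeta>. V s \<noteq> topspace Dtop}" and Vo: "\<forall>s\<in>\<zeta>. openin Dtop (V s)"
    and xV: "x \<in> Pi\<^sub>E \<zeta> V" and VU: "Pi\<^sub>E \<zeta> V \<subseteq> U"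
  proof -
    have "\<forall>x\<in>U. \<exists>V. finite {s \<in> \<zeta>. V s \<noteq> topspace Dtop} \<and> (\<forall>s\<in>\<zeta>. openin Dtop (V s)) \<and> x \<in> Pi\<^sub>E \<zeta> V \<and> Pi\<^sub>E \<zeta> V \<subseteq> U"
      using U unfolding Dpow_def openin_product_topology_alt .
    then show ?thesis using x that by meson
  qed
  have "\<forall>s\<in>\<zeta>. \<exists>W. finite {k. W k \<noteq> UNIV} \<and> x s \<in> Pi\<^sub>E UNIV W \<and> Pi\<^sub>E UNIV W \<subseteq> V s"
  proof
    fix s assume s: "s \<in> \<zeta>"
    have "openin Dtop (V s)" "x s \<in> V s" using Vo s xV by (auto simp: PiE_iff)
    then have "\<exists>W. finite {k \<in> UNIV. W k \<noteq> topspace (discrete_topology UNIV)} \<and> (\<forall>k\<in>UNIV. openin (discrete_topology UNIV) (W k)) \<and> x s \<in> Pi\<^sub>E UNIV W \<and> Pi\<^sub>E UNIV W \<subseteq> V s"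
      unfolding Dtop_def openin_product_topology_alt by blast
    then show "\<exists>W. finite {k. W k \<noteq> UNIV} \<and> x s \<in> Pi\<^sub>E UNIV W \<and> Pi\<^sub>E UNIV W \<subseteq> V s"
      by auto
  qed
  then obtain W where W: "\<And>s. s\<in>\<zeta> \<Longrightarrow> finite {k. W s k \<noteq> UNIV} \<and> x s \<in> Pi\<^sub>E UNIV (W s) \<and> Pi\<^sub>E UNIV (W s) \<subseteq> V s"
    by metis
  define S where "S = {s \<in> \<zeta>. V s \<noteq> topspace Dtop}"
  define D where "D = {i. fst i \<in> S \<and> W (fst i) (snd i) \<noteq> UNIV}"
  have "D \<subseteq> (\<Union>s\<in>S. {s} \<times> {k. W s k \<noteq> UNIV})" unfolding D_def by auto
  moreover have "finite (\<Union>s\<in>S. {s} \<times> {k. W s k \<noteq> UNIV})"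
    using Vf W unfolding S_def by auto
  ultimately have fD: "finite D" by (rule finite_subset)
  define p where "p = (\<lambda>i. if i \<in> D then Some (bitat x i) else None)"
  have dp: "dom p = D" unfolding p_def by (auto simp: dom_def)
  have "D \<subseteq> \<zeta> \<times> UNIV" unfolding D_def S_def by auto
  moreover have "x \<in> Cyl \<zeta> p"
    using xV U x unfolding Cyl_def p_def by (auto dest: openin_subset)
  moreover have "Cyl \<zeta> p \<subseteq> U"
  proof
    fix y assume y: "y \<in> Cyl \<zeta> p"
    have "y \<in> Pi\<^sub>E \<zeta> V"
    proof (rule PiE_I)
      fix s assume s: "s \<in> \<zeta>"
      show "y s \<in> V s"
      proof (cases "s \<in> S")
        case False
        then show ?thesis using s unfolding S_def by simp
      next
        case True
        have "y s \<in> Pi\<^sub>E UNIV (W s)"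
        proof (rule PiE_I)
          fix k :: nat
          show "y s k \<in> W s k"
          proof (cases "W s k = UNIV")
            case False
            then have "(s,k) \<in> D" using True unfolding D_def by simp
            then have "y s k = x s k" using y unfolding Cyl_def p_def bitat_def by auto
            then show ?thesis using W[OF s] by (auto simp: PiE_iff)
          qed simp
        qed simp
        then show ?thesis using W[OF s] by blast
      qed
    next
      fix s assume "s \<notin> \<zeta>" then show "y s = undefined"
        using y unfolding Cyl_def topspace_Dpow by (auto simp: PiE_iff extensional_def)
    qed
    then show "y \<in> U" using VU by blast
  qed
  ultimately show ?thesis using fD by (intro exI[of _ p]) (simp only: dp)
qed

definition ND :: "'a list set \<Rightarrow> ('a list \<Rightarrow> nat \<Rightarrow> bool) set \<Rightarrow> bool" where
  "ND \<zeta> N \<longleftrightarrow> (\<forall>p. finite (dom p) \<and> dom p \<subseteq> \<zeta> \<times> UNIV \<longrightarrow>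
     (\<exists>r. p \<subseteq>\<^sub>m r \<and> finite (dom r) \<and> dom r \<subseteq> \<zeta> \<times> UNIV \<and> Cyl \<zeta> r \<inter> N = {}))"

lemma ND_transport:
  assumes H: "homeomorphic_map (Dpow \<zeta>) (subtopology (Dpow \<zeta>) X) H"
    and N: "nowhere_dense_in (subtopology (Dpow \<zeta>) X) N"
  shows "ND \<zeta> {x \<in> topspace (Dpow \<zeta>). H x \<in> N}"
  unfolding ND_def
proof (intro allI impI)
  fix p :: "'a list \<times> nat \<Rightarrow> bool option"
  assume p: "finite (dom p) \<and> dom p \<subseteq> \<zeta> \<times> UNIV"
  define TX where "TX = subtopology (Dpow \<zeta>) X"
  define V where "V = Cyl \<zeta> p"
  have Vo: "openin (Dpow \<zeta>) V" and Vne: "V \<noteq> {}"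
    using Cyl_open Cyl_nonempty p unfolding V_def by auto
  have HVo: "openin TX (H ` V)"
    using homeomorphic_imp_open_map[OF H] Vo unfolding open_map_def TX_def by blast
  have NI: "TX interior_of (TX closure_of N) = {}" and Nsub: "N \<subseteq> topspace TX"
    using N unfolding nowhere_dense_in_def TX_def by auto
  have "\<not> H ` V \<subseteq> TX closure_of N"
  proof
    assume "H ` V \<subseteq> TX closure_of N"
    then have "H ` V \<subseteq> TX interior_of (TX closure_of N)"
      using HVo by (rule interior_of_maximal)
    then show False using NI Vne by auto
  qed
  then obtain x0 where x0V: "x0 \<in> V" and x0N: "H x0 \<notin> TX closure_of N" by auto
  define W0 where "W0 = H ` V - TX closure_of N"
  have W0o: "openin TX W0" unfolding W0_def
    using openin_diff[OF HVo closedin_closure_of] .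
  define W where "W = {x \<in> topspace (Dpow \<zeta>). H x \<in> W0}"
  have cH: "continuous_map (Dpow \<zeta>) TX H"
    using homeomorphic_imp_continuous_map[OF H] unfolding TX_def .
  have Wo: "openin (Dpow \<zeta>) W" unfolding W_def
    using openin_continuous_map_preimage[OF cH W0o] .
  have "x0 \<in> topspace (Dpow \<zeta>)" using openin_subset[OF Vo] x0V by blast
  then have x0W: "x0 \<in> W" using x0V x0N unfolding W_def W0_def by blast
  obtain p0 where p0: "finite (dom p0)" "dom p0 \<subseteq> \<zeta> \<times> UNIV" "x0 \<in> Cyl \<zeta> p0" "Cyl \<zeta> p0 \<subseteq> W"
    using basis[OF Wo x0W] by blast
  define r where "r = (\<lambda>i. if i \<in> dom p0 \<union> dom p then Some (bitat x0 i) else None)"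
  have dr: "dom r = dom p0 \<union> dom p" unfolding r_def by (auto simp: dom_def)
  have "\<forall>i b. p i = Some b \<longrightarrow> bitat x0 i = b" using x0V unfolding V_def Cyl_def by blast
  then have pr: "p \<subseteq>\<^sub>m r" unfolding r_def map_le_def by auto
  have "\<forall>i b. p0 i = Some b \<longrightarrow> bitat x0 i = b" using p0(3) unfolding Cyl_def by blast
  then have p0r: "p0 \<subseteq>\<^sub>m r" unfolding r_def map_le_def by auto
  have "Cyl \<zeta> r \<inter> {x \<in> topspace (Dpow \<zeta>). H x \<in> N} = {}"
  proof -
    have "Cyl \<zeta> r \<subseteq> W" using Cyl_mono[OF p0r] p0(4) by blast
    moreover have "N \<subseteq> TX closure_of N" using Nsub by (rule closure_of_subset)
    ultimately show ?thesis unfolding W_def W0_def by blast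
  qed
  then show "\<exists>r. p \<subseteq>\<^sub>m r \<and> finite (dom r) \<and> dom r \<subseteq> \<zeta> \<times> UNIV \<and> Cyl \<zeta> r \<inter> {x \<in> topspace (Dpow \<zeta>). H x \<in> N} = {}"
  proof -
    have "finite (dom r)" "dom r \<subseteq> \<zeta> \<times> UNIV" using dr p p0 by auto
    then show ?thesis using pr \<open>Cyl \<zeta> r \<inter> _ = {}\<close> by blast
  qed
qed

definition cmb :: "('a list \<times> nat \<Rightarrow> bool option) \<Rightarrow> ('a list \<times> nat) set \<Rightarrow> ('a list \<times> nat \<Rightarrow> bool) \<Rightarrow> ('a list \<times> nat \<Rightarrow> bool option)" where
  "cmb q E \<sigma> = (\<lambda>i. if i \<in> E then Some (\<sigma> i) else q i)"

lemma dom_cmb: "dom (cmb q E \<sigma>) = dom q \<union> E"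
  unfolding cmb_def by (auto simp: dom_def)

lemma step_finite:
  assumes N: "ND \<zeta> N" and q: "finite (dom q)" "dom q \<subseteq> \<zeta> \<times> UNIV"
    and E: "finite E" "E \<subseteq> \<zeta> \<times> UNIV" "dom q \<inter> E = {}"
    and S: "finite S"
  shows "\<exists>q'. q \<subseteq>\<^sub>m q' \<and> finite (dom q') \<and> dom q' \<subseteq> \<zeta> \<times> UNIV \<and> dom q' \<inter> E = {} \<and>
     (\<forall>\<sigma>\<in>S. Cyl \<zeta> (cmb q' E \<sigma>) \<inter> N = {})"
  using S
proof (induction S rule: finite_induct)
  case empty
  then show ?case using q E by (intro exI[of _ q]) (auto simp: map_le_def)
next
  case (insert \<sigma> S)
  then obtain q1 where q1: "q \<subseteq>\<^sub>m q1" "finite (dom q1)" "dom q1 \<subseteq> \<zeta> \<times> UNIV" "dom q1 \<inter> E = {}"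
     "\<forall>\<sigma>\<in>S. Cyl \<zeta> (cmb q1 E \<sigma>) \<inter> N = {}" by blast
  have "finite (dom (cmb q1 E \<sigma>)) \<and> dom (cmb q1 E \<sigma>) \<subseteq> \<zeta> \<times> UNIV"
    using q1 E by (simp add: dom_cmb)
  then obtain r where r: "cmb q1 E \<sigma> \<subseteq>\<^sub>m r" "finite (dom r)" "dom r \<subseteq> \<zeta> \<times> UNIV" "Cyl \<zeta> r \<inter> N = {}"
    using N unfolding ND_def by blast
  define q2 where "q2 = r |` (- E)"
  have q12: "q1 \<subseteq>\<^sub>m q2"
    using r(1) q1(4) unfolding q2_def map_le_def cmb_def restrict_map_def by (force simp: dom_def)
  have dq2: "dom q2 \<subseteq> dom r" "dom q2 \<inter> E = {}" unfolding q2_def by auto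
  have "cmb q2 E \<sigma> = r"
  proof
    fix i show "cmb q2 E \<sigma> i = r i"
    proof (cases "i \<in> E")
      case True
      then have "cmb q1 E \<sigma> i = Some (\<sigma> i)" unfolding cmb_def by simp
      then have "r i = Some (\<sigma> i)" using r(1) unfolding map_le_def by (metis domI)
      then show ?thesis using True unfolding cmb_def by simp
    next
      case False
      then show ?thesis unfolding cmb_def q2_def by simp
    qed
  qed
  moreover have "cmb q1 E \<tau> \<subseteq>\<^sub>m cmb q2 E \<tau>" for \<tau>
    using q12 unfolding cmb_def map_le_def by (auto simp: dom_def)
  ultimately have "\<forall>\<tau>\<in>insert \<sigma> S. Cyl \<zeta> (cmb q2 E \<tau>) \<inter> N = {}"
    using q1(5) r(4) Cyl_mono by blast
  moreover have "q \<subseteq>\<^sub>m q2" using q1(1) q12 map_le_trans by blast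
  moreover have "finite (dom q2)" using dq2 r(2) finite_subset by blast
  ultimately show ?case using dq2 r(3) by blast
qed

lemma step:
  assumes N: "ND \<zeta> N" and q: "finite (dom q)" "dom q \<subseteq> \<zeta> \<times> UNIV"
    and E: "finite E" "E \<subseteq> \<zeta> \<times> UNIV" "dom q \<inter> E = {}"
  shows "\<exists>q'. q \<subseteq>\<^sub>m q' \<and> finite (dom q') \<and> dom q' \<subseteq> \<zeta> \<times> UNIV \<and> dom q' \<inter> E = {} \<and>
     (\<forall>\<sigma>. Cyl \<zeta> (cmb q' E \<sigma>) \<inter> N = {})"
proof -
  define S where "S = (\<lambda>A i. i \<in> A) ` Pow E"
  have "finite S" unfolding S_def using E by simp
  from step_finite[OF N q E this] obtain q' where q': "q \<subseteq>\<^sub>m q'" "finite (dom q')" "dom q' \<subseteq> \<zeta> \<times> UNIV" "dom q' \<inter> E = {}"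
     "\<forall>\<sigma>\<in>S. Cyl \<zeta> (cmb q' E \<sigma>) \<inter> N = {}"
    by (elim exE conjE)
  have "Cyl \<zeta> (cmb q' E \<sigma>) \<inter> N = {}" for \<sigma>
  proof -
    have "(\<lambda>i. i \<in> {j \<in> E. \<sigma> j}) \<in> S" unfolding S_def by blast
    moreover have "cmb q' E (\<lambda>i. i \<in> {j \<in> E. \<sigma> j}) = cmb q' E \<sigma>"
      unfolding cmb_def by auto
    ultimately show ?thesis using q'(5) by metis
  qed
  then show ?thesis using q'(1-4) by (intro exI[of _ q']) simp
qed

definition stp :: "'a list set \<Rightarrow> ('a list \<Rightarrow> nat \<Rightarrow> bool) set \<Rightarrow> ('a list \<times> nat \<Rightarrow> bool option) \<Rightarrow> ('a list \<times> nat) set \<Rightarrow> ('a list \<times> nat \<Rightarrow> bool option)" where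
  "stp \<zeta> N q E = (SOME q'. q \<subseteq>\<^sub>m q' \<and> finite (dom q') \<and> dom q' \<subseteq> \<zeta> \<times> UNIV \<and> dom q' \<inter> E = {} \<and>
     (\<forall>\<sigma>. Cyl \<zeta> (cmb q' E \<sigma>) \<inter> N = {}))"

lemma stp_spec:
  assumes N: "ND \<zeta> N" and q: "finite (dom q)" "dom q \<subseteq> \<zeta> \<times> UNIV"
    and E: "finite E" "E \<subseteq> \<zeta> \<times> UNIV" "dom q \<inter> E = {}"
  shows "q \<subseteq>\<^sub>m stp \<zeta> N q E \<and> finite (dom (stp \<zeta> N q E)) \<and> dom (stp \<zeta> N q E) \<subseteq> \<zeta> \<times> UNIV \<and>
     dom (stp \<zeta> N q E) \<inter> E = {} \<and> (\<forall>\<sigma>. Cyl \<zeta> (cmb (stp \<zeta> N q E) E \<sigma>) \<inter> N = {})"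
  unfolding stp_def by (rule someI_ex[OF step[OF N q E]])

definition fresh :: "'a list \<Rightarrow> ('a list \<times> nat \<Rightarrow> bool option) \<Rightarrow> ('a list \<times> nat) set \<Rightarrow> nat" where
  "fresh s q E = (SOME k. (s, k) \<notin> dom q \<union> E)"

lemma fresh_spec:
  assumes "finite (dom q)" "finite E"
  shows "(s, fresh s q E) \<notin> dom q \<union> E"
proof -
  have "finite (snd ` (dom q \<union> E))" using assms by simp
  then obtain k where "k \<notin> snd ` (dom q \<union> E)" using ex_new_if_finite[OF infinite_UNIV_nat] by blast
  then have "(s, k) \<notin> dom q \<union> E" by force
  then show ?thesis unfolding fresh_def by (rule someI)
qed

primrec stage :: "'a list set \<Rightarrow> (nat \<Rightarrow> ('a list \<Rightarrow> nat \<Rightarrow> bool) set) \<Rightarrow> (nat \<Rightarrow> 'a list \<times> nat) \<Rightarrow> ('a list \<times> nat \<Rightarrow> bool option) \<Rightarrow> nat \<Rightarrow> ('a list \<times> nat \<Rightarrow> bool option) \<times> ('a list \<times> nat) set" where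
  "stage \<zeta> Nd g q0 0 = (q0, {})"
| "stage \<zeta> Nd g q0 (Suc n) = (let q' = stp \<zeta> (Nd n) (fst (stage \<zeta> Nd g q0 n)) (snd (stage \<zeta> Nd g q0 n)) in
     (q', insert (fst (g n), fresh (fst (g n)) q' (snd (stage \<zeta> Nd g q0 n))) (snd (stage \<zeta> Nd g q0 n))))"

lemma fusion:
  fixes Nd :: "nat \<Rightarrow> ('a list \<Rightarrow> nat \<Rightarrow> bool) set" and g :: "nat \<Rightarrow> 'a list \<times> nat"
  assumes g: "bij_betw g UNIV (\<zeta> \<times> (UNIV :: nat set))"
    and Nd: "\<And>n. ND \<zeta> (Nd n)"
    and q0: "finite (dom q0)" "dom q0 \<subseteq> \<zeta> \<times> UNIV"
  shows "\<exists>K. continuous_map (Dpow \<zeta>) (Dpow \<zeta>) K \<and> (\<forall>x\<in>topspace (Dpow \<zeta>). K x \<in> Cyl \<zeta> q0) \<and>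
     (\<forall>x\<in>topspace (Dpow \<zeta>). \<forall>n. K x \<notin> Nd n) \<and>
     (\<forall>x\<in>topspace (Dpow \<zeta>). \<forall>y\<in>topspace (Dpow \<zeta>). \<forall>s\<in>\<zeta>. K x s = K y s \<longleftrightarrow> x s = y s)"
proof -
  define Q where "Q n = fst (stage \<zeta> Nd g q0 n)" for n
  define E where "E n = snd (stage \<zeta> Nd g q0 n)" for n
  define pos where "pos n = (fst (g n), fresh (fst (g n)) (Q (Suc n)) (E n))" for n
  have gin: "fst (g n) \<in> \<zeta>" for n
  proof -
    have "g n \<in> \<zeta> \<times> UNIV" using bij_betw_apply[OF g] by blast
    then show ?thesis by (cases "g n") simp
  qed
  have Q0: "Q 0 = q0" and E0: "E 0 = {}" unfolding Q_def E_def by simp_all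
  have QS: "Q (Suc n) = stp \<zeta> (Nd n) (Q n) (E n)" for n unfolding Q_def E_def by (simp add: Let_def)
  have ES: "E (Suc n) = insert (pos n) (E n)" for n unfolding Q_def E_def pos_def by (simp add: Let_def)
  have inv: "finite (dom (Q n)) \<and> dom (Q n) \<subseteq> \<zeta> \<times> UNIV \<and> finite (E n) \<and> E n \<subseteq> \<zeta> \<times> UNIV \<and> dom (Q n) \<inter> E n = {}" for n
  proof (induction n)
    case 0
    then show ?case using q0 Q0 E0 by simp
  next
    case (Suc n)
    have sp: "Q n \<subseteq>\<^sub>m Q (Suc n) \<and> finite (dom (Q (Suc n))) \<and> dom (Q (Suc n)) \<subseteq> \<zeta> \<times> UNIV \<and>
     dom (Q (Suc n)) \<inter> E n = {}"
      unfolding QS using stp_spec[OF Nd, of "Q n" "E n"] Suc by blast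
    have "pos n \<notin> dom (Q (Suc n)) \<union> E n" unfolding pos_def using fresh_spec sp Suc by blast
    moreover have "pos n \<in> \<zeta> \<times> UNIV" unfolding pos_def using gin by simp
    ultimately show ?case using sp Suc unfolding ES by auto
  qed
  have spec: "Q n \<subseteq>\<^sub>m Q (Suc n) \<and> (\<forall>\<sigma>. Cyl \<zeta> (cmb (Q (Suc n)) (E n) \<sigma>) \<inter> Nd n = {})" for n
    unfolding QS using stp_spec[OF Nd, of "Q n" "E n"] inv[of n] by blast
  have posfresh: "pos n \<notin> dom (Q (Suc n)) \<union> E n" for n
    unfolding pos_def using fresh_spec inv by blast
  have mono: "m \<le> n \<Longrightarrow> Q m \<subseteq>\<^sub>m Q n" for m n
  proof (induction n)
    case 0 then show ?case by (simp add: map_le_def)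
  next
    case (Suc n)
    show ?case
    proof (cases "m = Suc n")
      case True then show ?thesis by (simp add: map_le_def)
    next
      case False
      then have "Q m \<subseteq>\<^sub>m Q n" using Suc by simp
      then show ?thesis using spec[of n] map_le_trans by blast
    qed
  qed
  have Epos: "E n = pos ` {..<n}" for n
    by (induction n) (simp_all add: E0 ES lessThan_Suc)
  have inj_pos: "inj pos"
  proof (rule injI)
    have *: "m < n \<Longrightarrow> pos m \<noteq> pos n" for m n
    proof
      assume mn: "m < n" and e: "pos m = pos n"
      have "pos m \<in> pos ` {..<n}" using mn by blast
      then have "pos n \<in> E n" using e Epos[of n] by simp
      then show False using posfresh[of n] by blast
    qed
    fix m n assume "pos m = pos n"
    then show "m = n" using *[of m n] *[of n m] by (metis linorder_neqE_nat)
  qed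
  have pos_notQ: "pos m \<notin> dom (Q n)" for m n
  proof (cases "m < n")
    case True
    then show ?thesis using Epos[of n] inv[of n] by auto
  next
    case False
    then have "dom (Q n) \<subseteq> dom (Q (Suc m))" using mono[of n "Suc m"] map_le_implies_dom_le by simp
    then show ?thesis using posfresh[of m] by auto
  qed
  define val where "val i = (if \<exists>n. i \<in> dom (Q n) then the (Q (SOME n. i \<in> dom (Q n)) i) else False)" for i
  have val_eq: "Q n i = Some b \<Longrightarrow> val i = b" for n i b
  proof -
    assume a: "Q n i = Some b"
    then have ex: "\<exists>n. i \<in> dom (Q n)" by blast
    define n' where "n' = (SOME n. i \<in> dom (Q n))"
    have "i \<in> dom (Q n')" unfolding n'_def using someI_ex[OF ex] .
    then obtain c where c: "Q n' i = Some c" by blast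
    have "Q n \<subseteq>\<^sub>m Q (max n n')" "Q n' \<subseteq>\<^sub>m Q (max n n')" using mono by simp_all
    then have "b = c" using a c unfolding map_le_def by (metis domI option.inject)
    then show "val i = b" using c ex unfolding val_def n'_def[symmetric] by simp
  qed
  define K where "K x = (\<lambda>s. if s \<in> \<zeta> then (\<lambda>k. if (s,k) \<in> range pos then x s (snd (g (inv pos (s,k)))) else val (s,k)) else undefined)" for x :: "'a list \<Rightarrow> nat \<Rightarrow> bool"
  have Ktop: "K x \<in> topspace (Dpow \<zeta>)" for x unfolding topspace_Dpow K_def by auto
  define sx where "sx x i = x (fst i) (snd (g (inv pos i)))" for x :: "'a list \<Rightarrow> nat \<Rightarrow> bool" and i
  have Kcyl: "K x \<in> Cyl \<zeta> (cmb (Q n) (E m) (sx x))" for x n m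
    unfolding Cyl_def
  proof (intro CollectI conjI allI impI Ktop)
    fix i b assume a: "cmb (Q n) (E m) (sx x) i = Some b"
    show "bitat (K x) i = b"
    proof (cases "i \<in> E m")
      case True
      then have "i \<in> range pos" "fst i \<in> \<zeta>" using Epos[of m] inv[of m] by auto
      then show ?thesis using a True unfolding cmb_def bitat_def K_def sx_def by simp
    next
      case False
      then have qi: "Q n i = Some b" using a unfolding cmb_def by simp
      then have "fst i \<in> \<zeta>" using inv[of n] by (auto simp: dom_def)
      moreover have "i \<notin> range pos" using pos_notQ qi by blast
      ultimately show ?thesis using val_eq[OF qi] unfolding bitat_def K_def by simp
    qed
  qed
  have cmb0: "cmb q {} \<sigma> = q" for q \<sigma> unfolding cmb_def by simp
  have K1: "\<forall>x\<in>topspace (Dpow \<zeta>). K x \<in> Cyl \<zeta> q0"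
    using Kcyl[of _ 0 0] by (simp add: Q0 E0 cmb0)
  have K2: "\<forall>x\<in>topspace (Dpow \<zeta>). \<forall>n. K x \<notin> Nd n"
    using Kcyl spec by blast
  have K3: "\<forall>x\<in>topspace (Dpow \<zeta>). \<forall>y\<in>topspace (Dpow \<zeta>). \<forall>s\<in>\<zeta>. K x s = K y s \<longleftrightarrow> x s = y s"
  proof (intro ballI iffI)
    fix x y s assume s: "s \<in> \<zeta>" and e: "K x s = K y s"
    show "x s = y s"
    proof
      fix j
      have "(s, j) \<in> g ` UNIV" using bij_betw_imp_surj_on[OF g] s by blast
      then obtain n where n0: "(s, j) = g n" by (rule rangeE)
      then have n: "g n = (s, j)" by simp
      define k where "k = snd (pos n)"
      have pn: "pos n = (s, k)" unfolding k_def pos_def n by simp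
      have "inv pos (s, k) = n" using inv_f_f[OF inj_pos, of n] pn by simp
      then have "K x s k = x s j" "K y s k = y s j" unfolding K_def using s n pn by (auto intro: range_eqI[of "(s,k)" pos n, OF pn[symmetric]])
      then show "x s j = y s j" using e by metis
    qed
  next
    fix x y :: "'a list \<Rightarrow> nat \<Rightarrow> bool" and s assume "x s = y s" then show "K x s = K y s" unfolding K_def by simp
  qed
  have "continuous_map (Dpow \<zeta>) (product_topology (\<lambda>_. Dtop) \<zeta>) K"
    unfolding continuous_map_componentwise
  proof (intro conjI ballI)
    show "K ` topspace (Dpow \<zeta>) \<subseteq> extensional \<zeta>" unfolding K_def by (auto simp: extensional_def)
  next
    fix s assume s: "s \<in> \<zeta>"
    show "continuous_map (Dpow \<zeta>) Dtop (\<lambda>x. K x s)"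
      unfolding Dtop_def continuous_map_componentwise_UNIV
    proof
      fix k
      show "continuous_map (Dpow \<zeta>) (discrete_topology UNIV) (\<lambda>x. K x s k)"
      proof (cases "(s,k) \<in> range pos")
        case True
        then show ?thesis unfolding K_def using s cont_bit[OF s] by simp
      next
        case False
        then show ?thesis unfolding K_def using s by simp
      qed
    qed
  qed
  then have "continuous_map (Dpow \<zeta>) (Dpow \<zeta>) K" by (simp add: Dpow_def)
  then show ?thesis using K1 K2 K3 by blast
qed

lemma restrict_eq_iff: "restrict f A = restrict g A \<longleftrightarrow> (\<forall>a\<in>A. f a = g a)"
proof
  assume h: "restrict f A = restrict g A"
  show "\<forall>a\<in>A. f a = g a"
  proof
    fix a assume a: "a \<in> A"
    have "f a = restrict f A a" using a by simp
    also have "\<dots> = restrict g A a" using h by simp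
    also have "\<dots> = g a" using a by simp
    finally show "f a = g a" .
  qed
next
  assume "\<forall>a\<in>A. f a = g a"
  then show "restrict f A = restrict g A" by (intro restrict_ext) blast
qed

theorem corollary3p10:
  fixes \<zeta> :: "'a list set" and X A :: "('a list \<Rightarrow> (nat \<Rightarrow> bool)) set"
  assumes "Xi_set \<zeta>"
    and "X \<in> IPS \<zeta>"
    and "A \<subseteq> X"
    and "baire_property_in (subtopology (Dpow \<zeta>) X) A"
    and "\<not> meager_in (subtopology (Dpow \<zeta>) X) A"
  shows "\<exists>Y \<in> IPS \<zeta>. Y \<subseteq> A"
proof -
  define TX where "TX = subtopology (Dpow \<zeta>) X"
  have Xsub: "X \<subseteq> topspace (Dpow \<zeta>)" using assms(2) unfolding IPS_def by blast
  obtain H where H: "homeomorphic_map (Dpow \<zeta>) TX H"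
    and HP: "\<forall>x0\<in>topspace (Dpow \<zeta>). \<forall>x1\<in>topspace (Dpow \<zeta>). \<forall>\<xi>. Xi_set \<xi> \<and> \<xi> \<subseteq> \<zeta> \<longrightarrow>
          (restrict x0 \<xi> = restrict x1 \<xi> \<longleftrightarrow> restrict (H x0) \<xi> = restrict (H x1) \<xi>)"
    using assms(2) unfolding IPS_def TX_def by blast
  have topTX: "topspace TX = X" unfolding TX_def using Xsub by auto
  obtain U where Uo: "openin TX U" and M: "meager_in TX ((A - U) \<union> (U - A))"
    using assms(4) unfolding baire_property_in_def TX_def by blast
  obtain F where Fc: "countable F" and Fnd: "\<forall>N\<in>F. nowhere_dense_in TX N"
    and Fcov: "(A - U) \<union> (U - A) \<subseteq> \<Union>F"
    using M unfolding meager_in_def by blast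
  have nm: "\<not> meager_in TX A" using assms(5) unfolding TX_def .
  have Ane: "A \<noteq> {}"
  proof
    assume "A = {}"
    then have "meager_in TX A" unfolding meager_in_def by (intro conjI exI[of _ "{}"]) auto
    then show False using nm by blast
  qed
  have Une: "U \<noteq> {}"
  proof
    assume "U = {}"
    then have "A \<subseteq> \<Union>F" using Fcov by blast
    moreover have "A \<subseteq> topspace TX" using assms(3) topTX by simp
    ultimately have "meager_in TX A" unfolding meager_in_def using Fc Fnd by blast
    then show False using nm by blast
  qed
  show ?thesis
  proof (cases "\<zeta> = {}")
    case True
    define c :: "'a list \<Rightarrow> nat \<Rightarrow> bool" where "c = (\<lambda>x. undefined)"
    have "topspace (Dpow \<zeta>) = {c}" unfolding c_def using True by (simp add: topspace_Dpow)
    then have X1: "X \<subseteq> {c}" and A1: "A \<subseteq> {c}" using Xsub assms(3) by auto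
    have "A = {c}" using subset_singletonD[OF A1] Ane by simp
    moreover have "X = {c}" using subset_singletonD[OF X1] assms(3) Ane by auto
    ultimately have "X = A" by simp
    then show ?thesis using assms(2) by blast
  next
    case False
    have zc: "countable \<zeta>" using assms(1) unfolding Xi_set_def by blast
    have "countable (\<zeta> \<times> (UNIV :: nat set))" using zc by simp
    moreover have "infinite (\<zeta> \<times> (UNIV :: nat set))" using False by (simp add: finite_cartesian_product_iff)
    ultimately obtain e :: "'a list \<times> nat \<Rightarrow> nat" where e: "bij_betw e (\<zeta> \<times> UNIV) UNIV"
      by (rule countableE_infinite)
    define g where "g = inv_into (\<zeta> \<times> UNIV) e"
    have g: "bij_betw g UNIV (\<zeta> \<times> (UNIV :: nat set))" unfolding g_def by (rule bij_betw_inv_into[OF e])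
    have cHX: "continuous_map (Dpow \<zeta>) TX H" using homeomorphic_imp_continuous_map[OF H] .
    have cH: "continuous_map (Dpow \<zeta>) (Dpow \<zeta>) H" using cHX unfolding TX_def continuous_map_in_subtopology by blast
    have Htop: "H x \<in> X" if "x \<in> topspace (Dpow \<zeta>)" for x
      using continuous_map_image_subset_topspace[OF cHX] that topTX by blast
    define U' where "U' = {x \<in> topspace (Dpow \<zeta>). H x \<in> U}"
    have U'o: "openin (Dpow \<zeta>) U'" unfolding U'_def using openin_continuous_map_preimage[OF cHX Uo] .
    obtain u where u: "u \<in> U" using Une by blast
    then have "u \<in> H ` topspace (Dpow \<zeta>)" using openin_subset[OF Uo] homeomorphic_imp_surjective_map[OF H] by blast
    then obtain x0 where x0: "x0 \<in> topspace (Dpow \<zeta>)" "H x0 = u" by blast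
    have x0U': "x0 \<in> U'" unfolding U'_def using x0 u by simp
    obtain q0 where q0: "finite (dom q0)" "dom q0 \<subseteq> \<zeta> \<times> UNIV" "x0 \<in> Cyl \<zeta> q0" "Cyl \<zeta> q0 \<subseteq> U'"
      using basis[OF U'o x0U'] by blast
    define F' where "F' = insert {} F"
    have F'c: "countable F'" and F'ne: "F' \<noteq> {}" unfolding F'_def using Fc by auto
    define Nd where "Nd n = {x \<in> topspace (Dpow \<zeta>). H x \<in> from_nat_into F' n}" for n
    have NdND: "ND \<zeta> (Nd n)" for n
    proof -
      have "from_nat_into F' n \<in> F'" using from_nat_into[OF F'ne] .
      then have "from_nat_into F' n = {} \<or> from_nat_into F' n \<in> F" unfolding F'_def by simp
      moreover have "nowhere_dense_in TX {}" unfolding nowhere_dense_in_def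
        using closure_of_empty interior_of_empty by simp
      ultimately have "nowhere_dense_in TX (from_nat_into F' n)" using Fnd by auto
      then have "nowhere_dense_in (subtopology (Dpow \<zeta>) X) (from_nat_into F' n)" unfolding TX_def .
      then show ?thesis unfolding Nd_def by (rule ND_transport[OF H[unfolded TX_def]])
    qed
    from fusion[where Nd=Nd, OF g NdND q0(1,2)] obtain K where Kc: "continuous_map (Dpow \<zeta>) (Dpow \<zeta>) K"
      and K1: "\<forall>x\<in>topspace (Dpow \<zeta>). K x \<in> Cyl \<zeta> q0"
      and K2: "\<forall>x\<in>topspace (Dpow \<zeta>). \<forall>n. K x \<notin> Nd n"
      and K3: "\<forall>x\<in>topspace (Dpow \<zeta>). \<forall>y\<in>topspace (Dpow \<zeta>). \<forall>s\<in>\<zeta>. K x s = K y s \<longleftrightarrow> x s = y s"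
      by (elim exE conjE)
    have Ktop: "K x \<in> topspace (Dpow \<zeta>)" if "x \<in> topspace (Dpow \<zeta>)" for x
      using K1 that unfolding Cyl_def by blast
    define Y where "Y = (H \<circ> K) ` topspace (Dpow \<zeta>)"
    have YA: "Y \<subseteq> A"
    proof
      fix y assume "y \<in> Y"
      then obtain x where x: "x \<in> topspace (Dpow \<zeta>)" and y: "y = H (K x)" unfolding Y_def by auto
      have "K x \<in> U'" using K1 x q0(4) by blast
      then have yU: "y \<in> U" unfolding U'_def y by blast
      show "y \<in> A"
      proof (rule ccontr)
        assume "y \<notin> A"
        then have "y \<in> \<Union>F" using yU Fcov by blast
        then obtain N where N: "N \<in> F" "y \<in> N" by blast
        then have "N \<in> range (from_nat_into F')" using range_from_nat_into[OF F'ne F'c] unfolding F'_def by blast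
        then obtain n where "N = from_nat_into F' n" by blast
        then have "K x \<in> Nd n" unfolding Nd_def using N Ktop[OF x] y by blast
        then show False using K2 x by blast
      qed
    qed
    have Ysub: "Y \<subseteq> topspace (Dpow \<zeta>)" unfolding Y_def using Htop Ktop Xsub by auto
    have injK: "inj_on K (topspace (Dpow \<zeta>))"
    proof (rule inj_onI)
      fix x y assume x: "x \<in> topspace (Dpow \<zeta>)" and y: "y \<in> topspace (Dpow \<zeta>)" and e: "K x = K y"
      have "x \<in> extensional \<zeta>" "y \<in> extensional \<zeta>" using x y by (auto simp: topspace_Dpow PiE_def)
      moreover have "x s = y s" if s: "s \<in> \<zeta>" for s
        using K3[rule_format, OF x y s] e by simp
      ultimately show "x = y" by (rule extensionalityI)
    qed
    have injHK: "inj_on (H \<circ> K) (topspace (Dpow \<zeta>))"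
    proof (rule comp_inj_on[OF injK])
      have "K ` topspace (Dpow \<zeta>) \<subseteq> topspace (Dpow \<zeta>)" using Ktop by blast
      then show "inj_on H (K ` topspace (Dpow \<zeta>))"
        using homeomorphic_imp_injective_map[OF H] inj_on_subset by blast
    qed
    have hom: "homeomorphic_map (Dpow \<zeta>) (subtopology (Dpow \<zeta>) Y) (H \<circ> K)"
    proof (rule continuous_imp_homeomorphic_map)
      show "continuous_map (Dpow \<zeta>) (subtopology (Dpow \<zeta>) Y) (H \<circ> K)"
        by (rule continuous_map_into_subtopology[OF continuous_map_compose[OF Kc cH]]) (auto simp: Y_def)
      show "compact_space (Dpow \<zeta>)" by (rule compact_Dpow)
      show "Hausdorff_space (subtopology (Dpow \<zeta>) Y)" using Hausdorff_Dpow by (rule Hausdorff_space_subtopology)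
      show "(H \<circ> K) ` topspace (Dpow \<zeta>) = topspace (subtopology (Dpow \<zeta>) Y)"
        using Ysub unfolding Y_def by auto
      show "inj_on (H \<circ> K) (topspace (Dpow \<zeta>))" by (rule injHK)
    qed
    have hprop: "\<forall>x0\<in>topspace (Dpow \<zeta>). \<forall>x1\<in>topspace (Dpow \<zeta>). \<forall>\<xi>. Xi_set \<xi> \<and> \<xi> \<subseteq> \<zeta> \<longrightarrow>
          (restrict x0 \<xi> = restrict x1 \<xi> \<longleftrightarrow> restrict ((H \<circ> K) x0) \<xi> = restrict ((H \<circ> K) x1) \<xi>)"
    proof (intro ballI allI impI)
      fix x0 x1 \<xi> assume x0: "x0 \<in> topspace (Dpow \<zeta>)" and x1: "x1 \<in> topspace (Dpow \<zeta>)"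
        and \<xi>: "Xi_set \<xi> \<and> \<xi> \<subseteq> \<zeta>"
      have "restrict x0 \<xi> = restrict x1 \<xi> \<longleftrightarrow> restrict (K x0) \<xi> = restrict (K x1) \<xi>"
        unfolding restrict_eq_iff using K3[rule_format, OF x0 x1] \<xi> by blast
      also have "\<dots> \<longleftrightarrow> restrict (H (K x0)) \<xi> = restrict (H (K x1)) \<xi>"
        using HP Ktop[OF x0] Ktop[OF x1] \<xi> by blast
      finally show "restrict x0 \<xi> = restrict x1 \<xi> \<longleftrightarrow> restrict ((H \<circ> K) x0) \<xi> = restrict ((H \<circ> K) x1) \<xi>"
        by simp
    qed
    have "Y \<in> IPS \<zeta>" unfolding IPS_def using Ysub hom hprop by blast
    then show ?thesis using YA by blast
  qed
qed

end
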